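(* Let $p\in(0,1)$ be fixed. With high probability, for every set $V\subset[n]$ of size at least $\frac{3}{p}\ln n$, the number of vertices of $[n]\setminus V$ having at most $\frac{1}{2}\ln n$ neighbours in $V$ in $G(n,p)$ is less than $\ln^3 n$.
   Context: $G(n,p)$ is the binomial random graph on $[n]$ with edge probability $p$; with high probability means with probability tending to $1$ as $n\to\infty$. *)

theory Defs
  imports "HOL-Probability.Probability"
begin

definition all_edges :: "nat \<Rightarrow> nat set set" where
  "all_edges n = {e. e \<subseteq> {1..n} \<and> card e = 2}"

text \<open>The binomial random graph G(n,p): each potential edge is present independently
  with probability p. A graph is represented by the indicator of its edge set
  (False outside the potential edges).\<close>
definition gnp :: "nat \<Rightarrow> real \<Rightarrow> (nat set \<Rightarrow> bool) pmf" where
  "gnp n p = Pi_pmf (all_edges n) False (\<lambda>_. bernoulli_pmf p)"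

definition nbrs_in :: "(nat set \<Rightarrow> bool) \<Rightarrow> nat set \<Rightarrow> nat \<Rightarrow> nat set" where
  "nbrs_in G V v = {u \<in> V. u \<noteq> v \<and> G {u, v}}"

end

theory Submission imports Defs begin

lemma finite_all_edges: "finite (all_edges n)"
proof -
  have "all_edges n \<subseteq> Pow {1..n}" unfolding all_edges_def by auto
  thus ?thesis by (rule finite_subset) simp
qed

lemma gnp_finite: "finite (set_pmf (gnp n p))"
proof -
  have "set_pmf (gnp n p) \<subseteq> PiE_dflt (all_edges n) False (\<lambda>_. UNIV)"
    unfolding gnp_def using set_Pi_pmf_subset[OF finite_all_edges, of n False "\<lambda>_. bernoulli_pmf p"]
    by (auto simp: PiE_dflt_def)
  moreover have "finite (PiE_dflt (all_edges n) False (\<lambda>_. UNIV :: bool set))"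
    by (intro finite_PiE_dflt finite_all_edges) auto
  ultimately show ?thesis by (rule finite_subset)
qed

lemma gnp_expect:
  assumes p: "0 \<le> p" "p \<le> 1" and S: "S \<subseteq> all_edges n"
  shows "measure_pmf.expectation (gnp n p) (\<lambda>G. exp (- real (card {e\<in>S. G e})))
         = (1 - p * (1 - exp (-1))) ^ card S"
proof -
  let ?A = "all_edges n"
  define f where "f = (\<lambda>e b. if e \<in> S \<and> b then exp (-1::real) else 1)"
  have fin: "finite ?A" by (rule finite_all_edges)
  have finS: "finite S" using S fin by (rule finite_subset)
  have eq: "exp (- real (card {e\<in>S. G e})) = (\<Prod>e\<in>?A. f e (G e))" for G :: "nat set \<Rightarrow> bool"
  proof -
    have "(\<Prod>e\<in>?A. f e (G e)) = (\<Prod>e\<in>?A \<inter> {e. e \<in> S \<and> G e}. exp (-1)) * (\<Prod>e\<in>?A \<inter> - {e. e \<in> S \<and> G e}. 1)"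
      unfolding f_def by (rule prod.If_cases[OF fin])
    also have "?A \<inter> {e. e \<in> S \<and> G e} = {e\<in>S. G e}" using S by auto
    finally have "(\<Prod>e\<in>?A. f e (G e)) = exp (-1) ^ card {e\<in>S. G e}" by simp
    also have "\<dots> = exp (- real (card {e\<in>S. G e}))"
      by (simp add: exp_of_nat_mult[symmetric])
    finally show ?thesis by simp
  qed
  have "measure_pmf.expectation (gnp n p) (\<lambda>G. exp (- real (card {e\<in>S. G e})))
      = measure_pmf.expectation (gnp n p) (\<lambda>G. \<Prod>e\<in>?A. f e (G e))"
    by (simp add: eq)
  also have "\<dots> = (\<Prod>e\<in>?A. measure_pmf.expectation (bernoulli_pmf p) (f e))"
    unfolding gnp_def
    by (rule expectation_prod_Pi_pmf[OF fin]) (auto simp: f_def intro: integrable_measure_pmf_finite)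
  also have "\<dots> = (\<Prod>e\<in>?A. if e \<in> S then (1 - p * (1 - exp (-1))) else 1)"
    using p by (intro prod.cong refl) (auto simp: f_def algebra_simps)
  also have "\<dots> = (\<Prod>e\<in>?A \<inter> {e. e \<in> S}. (1 - p * (1 - exp (-1)))) * (\<Prod>e\<in>?A \<inter> - {e. e \<in> S}. 1)"
    by (rule prod.If_cases[OF fin])
  also have "?A \<inter> {e. e \<in> S} = S" using S by auto
  finally show ?thesis by simp
qed

lemma gnp_markov:
  assumes p: "0 \<le> p" "p \<le> 1" and S: "S \<subseteq> all_edges n"
  shows "measure_pmf.prob (gnp n p) {G. real (card {e\<in>S. G e}) \<le> T}
         \<le> exp T * (1 - p * (1 - exp (-1))) ^ card S"
proof -
  have "measure_pmf.prob (gnp n p) {G. real (card {e\<in>S. G e}) \<le> T}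
      = measure_pmf.prob (gnp n p) {G \<in> space (measure_pmf (gnp n p)). exp (- real (card {e\<in>S. G e})) \<ge> exp (-T)}"
    by simp
  also have "\<dots> \<le> measure_pmf.expectation (gnp n p) (\<lambda>G. exp (- real (card {e\<in>S. G e}))) / exp (-T)"
    by (rule integral_Markov_inequality_measure) (auto intro: integrable_measure_pmf_finite gnp_finite)
  also have "\<dots> = exp T * (1 - p * (1 - exp (-1))) ^ card S"
    using gnp_expect[OF p S] by (simp add: exp_minus field_simps)
  finally show ?thesis .
qed

lemma edges_count:
  assumes U: "U \<subseteq> {1..n}" and V: "V \<subseteq> {1..n}" and disj: "U \<inter> V = {}"
  defines "S \<equiv> (\<lambda>(u,v). {u,v}) ` (U \<times> V)"
  shows "S \<subseteq> all_edges n" "card S = card U * card V"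
    "(\<Sum>u\<in>U. card (nbrs_in G V u)) = card {e\<in>S. G e}"
proof -
  have finU: "finite U" using U by (rule finite_subset) simp
  have finV: "finite V" using V by (rule finite_subset) simp
  have inj: "inj_on (\<lambda>(u,v). {u::nat,v}) (U \<times> V)"
    using disj by (auto simp: inj_on_def doubleton_eq_iff)
  show "S \<subseteq> all_edges n" unfolding S_def all_edges_def using U V disj by (auto simp: card_insert_if)
  show "card S = card U * card V" unfolding S_def using card_image[OF inj] by (simp add: card_cartesian_product)
  have "{e\<in>S. G e} = (\<lambda>(u,v). {u,v}) ` (SIGMA u:U. {v\<in>V. G {u,v}})" unfolding S_def by auto
  also have "card \<dots> = card (SIGMA u:U. {v\<in>V. G {u,v}})"
    by (rule card_image, rule inj_on_subset[OF inj]) auto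
  also have "\<dots> = (\<Sum>u\<in>U. card {v\<in>V. G {u,v}})" using finU finV by simp
  also have "\<dots> = (\<Sum>u\<in>U. card (nbrs_in G V u))"
    unfolding nbrs_in_def using disj by (intro sum.cong refl arg_cong[where f=card]) (auto simp: insert_commute)
  finally show "(\<Sum>u\<in>U. card (nbrs_in G V u)) = card {e\<in>S. G e}" by simp
qed

lemma event_bound:
  assumes p: "0 \<le> p" "p \<le> 1" and U: "U \<subseteq> {1..n}" and V: "V \<subseteq> {1..n}" and disj: "U \<inter> V = {}"
  shows "measure_pmf.prob (gnp n p) {G. \<forall>u\<in>U. real (card (nbrs_in G V u)) \<le> t}
         \<le> exp (real (card U) * t) * (1 - p * (1 - exp (-1))) ^ (card U * card V)"
proof -
  define S where "S = (\<lambda>(u,v). {u,v}) ` (U \<times> V)"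
  note ec = edges_count[OF U V disj, folded S_def]
  have "{G. \<forall>u\<in>U. real (card (nbrs_in G V u)) \<le> t} \<subseteq> {G. real (card {e\<in>S. G e}) \<le> real (card U) * t}"
  proof safe
    fix G assume h: "\<forall>u\<in>U. real (card (nbrs_in G V u)) \<le> t"
    have "real (card {e\<in>S. G e}) = (\<Sum>u\<in>U. real (card (nbrs_in G V u)))"
      using ec(3)[of G] by (metis of_nat_sum)
    also have "\<dots> \<le> (\<Sum>u\<in>U. t)" using h by (intro sum_mono) auto
    finally show "real (card {e\<in>S. G e}) \<le> real (card U) * t" by simp
  qed
  hence "measure_pmf.prob (gnp n p) {G. \<forall>u\<in>U. real (card (nbrs_in G V u)) \<le> t}
      \<le> measure_pmf.prob (gnp n p) {G. real (card {e\<in>S. G e}) \<le> real (card U) * t}"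
    by (intro measure_pmf.finite_measure_mono) auto
  also have "\<dots> \<le> exp (real (card U) * t) * (1 - p * (1 - exp (-1))) ^ card S"
    by (rule gnp_markov[OF p ec(1)])
  finally show ?thesis using ec(2) by simp
qed

lemma choose_le_pow: "n choose k \<le> n ^ k"
  by (cases "k \<le> n") (auto simp: binomial_le_pow binomial_eq_0)

lemma exp_m1_lt: "exp (-1::real) < 1/2"
proof -
  have "1 + 1/2 \<le> exp (1/2::real)" by (rule exp_ge_add_one_self)
  hence "(3/2)^2 \<le> exp (1/2::real) ^ 2" by (intro power_mono) auto
  also have "exp (1/2::real) ^ 2 = exp 1" by (simp add: exp_of_nat_mult[symmetric])
  finally have "2 < exp (1::real)" by (simp add: power2_eq_square)
  thus ?thesis by (simp add: exp_minus field_simps)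
qed

lemma bad_bound:
  fixes p :: real and n :: nat
  assumes p: "0 < p" "p < 1" and n: "n \<ge> 1"
    and L1: "1 \<le> ln (real n)"
    and L2: "(3/2 - 3 * exp (-1)) * ln (real n) ^ 2 \<ge> 3/p + 2"
  shows "measure_pmf.prob (gnp n p)
           (- {G. \<forall>V. V \<subseteq> {1..n} \<and> real (card V) \<ge> 3 / p * ln (real n) \<longrightarrow>
                 real (card {v \<in> {1..n} - V. real (card (nbrs_in G V v)) \<le> ln (real n) / 2})
                   < ln (real n) ^ 3}) \<le> exp (- ln (real n))"
proof -
  define L where "L = ln (real n)"
  define c where "c = exp (-1::real)"
  define k where "k = nat \<lceil>3/p * L\<rceil>"
  define m where "m = nat \<lceil>L ^ 3\<rceil>"
  define t where "t = L / 2"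
  define q where "q = 1 - p * (1 - c)"
  define A where "A = {V. V \<subseteq> {1..n} \<and> card V = k}"
  define C where "C = {U. U \<subseteq> {1..n} \<and> card U = m}"
  define P where "P = {(V,U). V \<in> A \<and> U \<in> C \<and> U \<inter> V = {}}"
  define E where "E = (\<lambda>(V,U). {G. \<forall>u\<in>U. real (card (nbrs_in G V u)) \<le> t})"
  let ?Bad = "- {G. \<forall>V. V \<subseteq> {1..n} \<and> real (card V) \<ge> 3 / p * ln (real n) \<longrightarrow>
                 real (card {v \<in> {1..n} - V. real (card (nbrs_in G V v)) \<le> ln (real n) / 2})
                   < ln (real n) ^ 3}"
  have finA: "finite A" unfolding A_def by (rule finite_subset[of _ "Pow {1..n}"]) auto
  have finC: "finite C" unfolding C_def by (rule finite_subset[of _ "Pow {1..n}"]) auto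
  have PAC: "P \<subseteq> A \<times> C" unfolding P_def by auto
  have finP: "finite P" using PAC finA finC by (meson finite_SigmaI finite_subset)
  have sub: "?Bad \<subseteq> (\<Union>x\<in>P. E x)"
  proof
    fix G assume "G \<in> ?Bad"
    then obtain V where V: "V \<subseteq> {1..n}" "real (card V) \<ge> 3 / p * L"
      and B: "\<not> real (card {v \<in> {1..n} - V. real (card (nbrs_in G V v)) \<le> t}) < L ^ 3"
      unfolding L_def t_def by auto
    define Bs where "Bs = {v \<in> {1..n} - V. real (card (nbrs_in G V v)) \<le> t}"
    have "k \<le> card V" unfolding k_def using V(2) by (simp add: nat_ceiling_le_eq)
    then obtain V' where V': "V' \<subseteq> V" "card V' = k" "finite V'" by (rule obtain_subset_with_card_n)
    have "m \<le> card Bs" unfolding m_def Bs_def using B by (simp add: nat_ceiling_le_eq)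
    then obtain U where U: "U \<subseteq> Bs" "card U = m" "finite U" by (rule obtain_subset_with_card_n)
    have finV: "finite V" using V(1) by (rule finite_subset) simp
    have "(V', U) \<in> P" unfolding P_def A_def C_def using V V' U by (auto simp: Bs_def)
    moreover have "G \<in> E (V', U)"
      unfolding E_def
    proof (simp, intro ballI)
      fix u assume "u \<in> U"
      hence u: "real (card (nbrs_in G V u)) \<le> t" using U by (auto simp: Bs_def)
      have "card (nbrs_in G V' u) \<le> card (nbrs_in G V u)"
        by (rule card_mono) (use finV V' in \<open>auto simp: nbrs_in_def\<close>)
      thus "real (card (nbrs_in G V' u)) \<le> t" using u by linarith
    qed
    ultimately show "G \<in> (\<Union>x\<in>P. E x)" by blast
  qed
  define Bd where "Bd = exp (real m * t) * q ^ (m * k)"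
  have Ebd: "measure_pmf.prob (gnp n p) (E x) \<le> Bd" if "x \<in> P" for x
  proof -
    obtain V U where x: "x = (V,U)" by (cases x)
    have "measure_pmf.prob (gnp n p) (E x) \<le> exp (real (card U) * t) * q ^ (card U * card V)"
      unfolding x E_def q_def c_def using that p
      by (simp only: prod.case, intro event_bound) (auto simp: x P_def A_def C_def)
    thus ?thesis using that by (simp add: x P_def A_def C_def Bd_def)
  qed
  have Bd0: "0 \<le> Bd"
  proof -
    have "c \<le> 1" "0 \<le> c" unfolding c_def by simp_all
    hence "p * (1 - c) \<le> 1" using p by (intro mult_le_one) auto
    hence "0 \<le> q" unfolding q_def by simp
    thus ?thesis unfolding Bd_def by simp
  qed
  have "measure_pmf.prob (gnp n p) ?Bad \<le> measure_pmf.prob (gnp n p) (\<Union>x\<in>P. E x)"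
    using sub by (intro measure_pmf.finite_measure_mono) auto
  also have "\<dots> \<le> (\<Sum>x\<in>P. measure_pmf.prob (gnp n p) (E x))"
    by (rule measure_pmf.finite_measure_subadditive_finite[OF finP]) auto
  also have "\<dots> \<le> (\<Sum>x\<in>P. Bd)" by (intro sum_mono Ebd)
  also have "\<dots> = real (card P) * Bd" by simp
  also have "\<dots> \<le> real (card (A \<times> C)) * Bd"
  proof -
    have "card P \<le> card (A \<times> C)" using finA finC PAC by (intro card_mono) auto
    thus ?thesis using Bd0 by (intro mult_right_mono) auto
  qed
  also have "real (card (A \<times> C)) = real (n choose k) * real (n choose m)"
    unfolding A_def C_def by (simp add: card_cartesian_product n_subsets)
  also have "\<dots> \<le> real n ^ k * real n ^ m"
    by (intro mult_mono) (auto simp flip: of_nat_power simp: choose_le_pow)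
  finally have step1: "measure_pmf.prob (gnp n p) ?Bad \<le> real n ^ k * real n ^ m * Bd"
    using Bd0 by (smt (verit) mult_right_mono)
  have L0: "0 \<le> L" using L1 by (simp add: L_def)
  have c0: "0 < c" and c2: "c < 1/2" using exp_m1_lt by (simp_all add: c_def)
  have nL: "real n = exp L" using n by (simp add: L_def)
  have kf: "3/p*L \<le> real k" unfolding k_def by linarith
  have ku: "real k \<le> 3/p*L + 1"
  proof -
    have "0 \<le> 3/p*L" using p L0 by simp
    hence "real k = real_of_int \<lceil>3/p*L\<rceil>" unfolding k_def by simp
    thus ?thesis using of_int_ceiling_le_add_one[of "3/p*L"] by linarith
  qed
  have mf: "L^3 \<le> real m" unfolding m_def by linarith
  have q0: "0 \<le> q"
  proof -
    have "p * (1 - c) \<le> 1" using p c0 c2 by (intro mult_le_one) auto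
    thus ?thesis unfolding q_def by simp
  qed
  have qe: "q \<le> exp (- (p * (1 - c)))" unfolding q_def using exp_ge_add_one_self[of "- (p * (1 - c))"] by simp
  have "q ^ (m * k) \<le> exp (- (p * (1 - c))) ^ (m * k)" using q0 qe by (intro power_mono)
  also have "\<dots> = exp (- (p * (1 - c) * (real m * real k)))" by (simp add: exp_of_nat_mult[symmetric])
  finally have qmk: "q ^ (m * k) \<le> exp (- (p * (1 - c) * (real m * real k)))" .
  have "real n ^ k * real n ^ m * Bd = exp (real k * L) * exp (real m * L) * exp (real m * t) * q ^ (m * k)"
    unfolding nL Bd_def by (simp add: exp_of_nat_mult[symmetric])
  also have "\<dots> \<le> exp (real k * L) * exp (real m * L) * exp (real m * t) * exp (- (p * (1 - c) * (real m * real k)))"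
    by (intro mult_left_mono qmk) auto
  also have "\<dots> = exp (real k * L + real m * L + real m * t - p * (1 - c) * (real m * real k))"
    by (simp add: exp_add exp_diff exp_minus field_simps)
  finally have e1: "real n ^ k * real n ^ m * Bd \<le> exp (real k * L + real m * L + real m * t - p * (1 - c) * (real m * real k))" .
  have pk: "3 * L \<le> p * real k" using kf p by (simp add: field_simps)
  have "(1 - c) * real m * (3 * L) \<le> (1 - c) * real m * (p * real k)"
    using pk c2 by (intro mult_left_mono) auto
  hence a1: "real k * L + real m * L + real m * t - p * (1 - c) * (real m * real k)
      \<le> real k * L - (3/2 - 3 * c) * (real m * L)"
    unfolding t_def by (simp add: algebra_simps)
  have "(3/2 - 3 * c) * (L^3 * L) \<le> (3/2 - 3 * c) * (real m * L)"
    using c2 mf L0 by (intro mult_left_mono mult_right_mono) auto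
  moreover have "(3/p + 2) * L^2 \<le> ((3/2 - 3 * c) * L^2) * L^2"
    using L2 by (intro mult_right_mono) (auto simp: c_def L_def)
  ultimately have a2: "(3/p + 2) * L^2 \<le> (3/2 - 3 * c) * (real m * L)"
    by (simp add: power2_eq_square power3_eq_cube algebra_simps)
  have a3: "real k * L \<le> (3/p*L + 1) * L" using ku L0 by (rule mult_right_mono)
  have a4: "L \<le> L^2" using L1 mult_right_mono[of 1 L L] by (simp add: power2_eq_square L_def)
  have ex: "real k * L + real m * L + real m * t - p * (1 - c) * (real m * real k) \<le> - L"
  proof -
    have a3': "real k * L \<le> 3/p*L^2 + L" using a3 by (simp add: algebra_simps power2_eq_square)
    have a2': "3/p*L^2 + 2*L^2 \<le> (3/2 - 3 * c) * (real m * L)" using a2 by (simp add: algebra_simps)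
    show ?thesis using a1 a2' a3' a4 by linarith
  qed
  show ?thesis
    using step1 e1 ex unfolding L_def[symmetric] by (smt (verit) exp_le_cancel_iff)
qed

theorem claim8:
  fixes p :: real
  assumes "0 < p" "p < 1"
  shows "(\<lambda>n. measure_pmf.prob (gnp n p)
           {G. \<forall>V. V \<subseteq> {1..n} \<and> real (card V) \<ge> 3 / p * ln (real n) \<longrightarrow>
                 real (card {v \<in> {1..n} - V. real (card (nbrs_in G V v)) \<le> ln (real n) / 2})
                   < ln (real n) ^ 3})
         \<longlonglongrightarrow> 1"
proof -
  define \<delta> where "\<delta> = 3/2 - 3 * exp (-1::real)"
  have d0: "0 < \<delta>" using exp_m1_lt by (simp add: \<delta>_def)
  define K where "K = max 1 ((3/p + 2) / \<delta>)"
  let ?Good = "\<lambda>n. {G. \<forall>V. V \<subseteq> {1..n} \<and> real (card V) \<ge> 3 / p * ln (real n) \<longrightarrow>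
                 real (card {v \<in> {1..n} - V. real (card (nbrs_in G V v)) \<le> ln (real n) / 2})
                   < ln (real n) ^ 3}"
  have ev: "eventually (\<lambda>n. 1 - inverse (real n) \<le> measure_pmf.prob (gnp n p) (?Good n)) sequentially"
    using eventually_ge_at_top[of "nat \<lceil>exp K\<rceil>"]
  proof eventually_elim
    case (elim n)
    have nK: "exp K \<le> real n" using elim by linarith
    have n1: "n \<ge> 1" using nK by (metis exp_gt_zero of_nat_0 less_le_trans not_less less_one)
    have LK: "K \<le> ln (real n)" using nK by (metis exp_gt_zero less_le_trans ln_exp ln_le_cancel_iff)
    have L1: "1 \<le> ln (real n)" using LK unfolding K_def by linarith
    have L2': "(3/p + 2) / \<delta> \<le> ln (real n)" using LK unfolding K_def by linarith
    have "3/p + 2 \<le> \<delta> * ln (real n)" using L2' d0 by (simp add: field_simps)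
    also have "\<dots> \<le> \<delta> * ln (real n) ^ 2"
      using L1 d0 mult_right_mono[of 1 "ln (real n)" "ln (real n)"]
      by (intro mult_left_mono) (auto simp: power2_eq_square)
    finally have L2: "(3/2 - 3 * exp (-1)) * ln (real n) ^ 2 \<ge> 3/p + 2" by (simp add: \<delta>_def)
    have b: "measure_pmf.prob (gnp n p) (- ?Good n) \<le> exp (- ln (real n))"
      by (rule bad_bound[OF assms n1 L1 L2])
    have "exp (- ln (real n)) = inverse (real n)" using n1 by (simp add: exp_minus)
    moreover have "measure_pmf.prob (gnp n p) (- ?Good n) = 1 - measure_pmf.prob (gnp n p) (?Good n)"
      using measure_pmf.prob_compl[of "?Good n" "gnp n p"] by (simp add: Compl_eq_Diff_UNIV)
    ultimately show ?case using b by linarith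
  qed
  have ev2: "eventually (\<lambda>n. measure_pmf.prob (gnp n p) (?Good n) \<le> 1) sequentially"
    by (simp add: measure_pmf.prob_le_1)
  have lim1: "(\<lambda>n. 1 - inverse (real n)) \<longlonglongrightarrow> 1"
    using tendsto_diff[OF tendsto_const[of 1] lim_inverse_n] by simp
  show ?thesis
    by (rule tendsto_sandwich[OF ev ev2 lim1 tendsto_const])
qed

end
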